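(* Let $(\mathfrak{g},\theta)$ be a nilpotent symplectic Lie algebra over $\mathbb{R}$ and let $\nabla$ be the affine structure on $\mathfrak{g}$ associated to $\theta$, i.e. $\nabla(X,Y)$ is the unique vector with $\theta(\nabla(X,Y),Z)=-\theta(Y,[X,Z])$ for all $Z\in\mathfrak{g}$. Let $\widetilde{\mathfrak{g}}=\mathfrak{g}\oplus\mathbb{R}$ with bracket $[(X,\alpha),(Y,\lambda)]=([X,Y],\theta(X,Y))$. Let $\varphi$ be a bilinear form on $\mathfrak{g}$ with $\varphi(X,Y)-\varphi(Y,X)=\theta(X,Y)$, and let $\widetilde{\nabla}:\widetilde{\mathfrak{g}}\times\widetilde{\mathfrak{g}}\to\widetilde{\mathfrak{g}}$ be a bilinear map such that for all $X,Y\in\mathfrak{g}$, $\lambda\in\mathbb{R}$: $\widetilde{\nabla}((X,0),(Y,0))=(\nabla(X,Y),\varphi(X,Y))$ and $\widetilde{\nabla}((X,0),(0,\lambda))=\widetilde{\nabla}((0,\lambda),(X,0))$. Define, for $U,V,W\in\widetilde{\mathfrak{g}}$, $$C(U,V,W)=\widetilde{\nabla}(U,\widetilde{\nabla}(V,W))-\widetilde{\nabla}(V,\widetilde{\nabla}(U,W))-\widetilde{\nabla}([U,V],W).$$ If $C((X,0),(0,1),(Y,0))=0$ for all $X,Y\in\mathfrak{g}$, then $C((X,0),(Y,0),(0,1))=0$ for all $X,Y\in\mathfrak{g}$.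
   Context: A symplectic Lie algebra is a Lie algebra with a nondegenerate skew-symmetric bilinear form $\theta$ satisfying $\theta([X,Y],Z)+\theta([Y,Z],X)+\theta([Z,X],Y)=0$. An affine structure on a Lie algebra $\mathfrak{h}$ is a bilinear map $\nabla$ with $\nabla(X,Y)-\nabla(Y,X)=[X,Y]$ and $\nabla(X,\nabla(Y,Z))-\nabla(Y,\nabla(X,Z))=\nabla([X,Y],Z)$ for all $X,Y,Z$; the map $\nabla$ defined from $\theta$ in the claim is such a structure. *)

theory Defs
  imports "HOL-Analysis.Analysis"
begin

definition lie_algebra :: "('a::euclidean_space \<Rightarrow> 'a \<Rightarrow> 'a) \<Rightarrow> bool" where
  "lie_algebra br \<longleftrightarrow> bilinear br \<and> (\<forall>x. br x x = 0) \<and>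
     (\<forall>x y z. br x (br y z) + br y (br z x) + br z (br x y) = 0)"

fun lower_central :: "('a::euclidean_space \<Rightarrow> 'a \<Rightarrow> 'a) \<Rightarrow> nat \<Rightarrow> 'a set" where
  "lower_central br 0 = UNIV"
| "lower_central br (Suc k) = span {br x y | x y. y \<in> lower_central br k}"

definition nilpotent_lie :: "('a::euclidean_space \<Rightarrow> 'a \<Rightarrow> 'a) \<Rightarrow> bool" where
  "nilpotent_lie br \<longleftrightarrow> lie_algebra br \<and> (\<exists>k. lower_central br k = {0})"

definition symplectic_form :: "('a::euclidean_space \<Rightarrow> 'a \<Rightarrow> 'a) \<Rightarrow> ('a \<Rightarrow> 'a \<Rightarrow> real) \<Rightarrow> bool" where
  "symplectic_form br \<theta> \<longleftrightarrow> bilinear \<theta> \<and> (\<forall>x y. \<theta> x y = - \<theta> y x) \<and>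
     (\<forall>x. (\<forall>y. \<theta> x y = 0) \<longrightarrow> x = 0) \<and>
     (\<forall>x y z. \<theta> (br x y) z + \<theta> (br y z) x + \<theta> (br z x) y = 0)"

definition ext_bracket :: "('a \<Rightarrow> 'a \<Rightarrow> 'a) \<Rightarrow> ('a \<Rightarrow> 'a \<Rightarrow> real) \<Rightarrow> ('a \<times> real) \<Rightarrow> ('a \<times> real) \<Rightarrow> ('a \<times> real)" where
  "ext_bracket br \<theta> u v = (br (fst u) (fst v), \<theta> (fst u) (fst v))"

definition curv :: "('b::real_vector \<Rightarrow> 'b \<Rightarrow> 'b) \<Rightarrow> ('b \<Rightarrow> 'b \<Rightarrow> 'b) \<Rightarrow> 'b \<Rightarrow> 'b \<Rightarrow> 'b \<Rightarrow> 'b" where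
  "curv N brk u v w = N u (N v w) - N v (N u w) - N (brk u v) w"

end

theory Submission
  imports Defs
begin

lemma bil_skew:
  assumes "bilinear f" "\<And>x. f x x = 0"
  shows "f y x = - f x y"
proof -
  have "0 = f (x + y) (x + y)" using assms(2) by simp
  also have "\<dots> = f x x + f x y + f y x + f y y"
    using assms(1) by (simp add: bilinear_ladd bilinear_radd algebra_simps)
  finally show ?thesis using assms(2) by (simp add: eq_neg_iff_add_eq_0 add.commute)
qed

theorem mainTheorem3:
  fixes br :: "'a::euclidean_space \<Rightarrow> 'a \<Rightarrow> 'a"
    and \<theta> :: "'a \<Rightarrow> 'a \<Rightarrow> real"
    and nabla :: "'a \<Rightarrow> 'a \<Rightarrow> 'a"
    and \<phi> :: "'a \<Rightarrow> 'a \<Rightarrow> real"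
    and N :: "'a \<times> real \<Rightarrow> 'a \<times> real \<Rightarrow> 'a \<times> real"
  assumes nil: "nilpotent_lie br"
    and sympl: "symplectic_form br \<theta>"
    and nabla_def: "\<And>X Y Z. \<theta> (nabla X Y) Z = - \<theta> Y (br X Z)"
    and phi_bil: "bilinear \<phi>"
    and phi_skew: "\<And>X Y. \<phi> X Y - \<phi> Y X = \<theta> X Y"
    and N_bil: "bilinear N"
    and N_gg: "\<And>X Y. N (X, 0) (Y, 0) = (nabla X Y, \<phi> X Y)"
    and N_comm: "\<And>X l. N (X, 0) (0, l) = N (0, l) (X, 0)"
    and hyp: "\<And>X Y. curv N (ext_bracket br \<theta>) (X, 0) (0, 1) (Y, 0) = 0"
  shows "\<forall>X Y. curv N (ext_bracket br \<theta>) (X, 0) (Y, 0) (0, 1) = 0"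
proof (intro allI)
  fix X Y :: 'a
  let ?e = "(0::'a, 1::real)"
  have lie: "lie_algebra br" using nil unfolding nilpotent_lie_def by blast
  have brbil: "bilinear br" and bralt: "\<And>x. br x x = 0" using lie unfolding lie_algebra_def by blast+
  have thbil: "bilinear \<theta>" and thskew: "\<And>x y. \<theta> x y = - \<theta> y x"
    and thnd: "\<And>x. (\<forall>y. \<theta> x y = 0) \<Longrightarrow> x = 0"
    and cocy: "\<And>x y z. \<theta> (br x y) z + \<theta> (br y z) x + \<theta> (br z x) y = 0"
    using sympl unfolding symplectic_form_def by blast+
  have brskew: "\<And>x y. br y x = - br x y" using bil_skew[OF brbil bralt] .
  have N00: "N (0,0) w = 0" "N w (0,0) = 0" for w
    using N_bil bilinear_lzero bilinear_rzero zero_prod_def by metis+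
  have brx0: "ext_bracket br \<theta> (Z, 0) ?e = (0,0)" for Z
    unfolding ext_bracket_def using bilinear_rzero[OF brbil] bilinear_rzero[OF thbil] by simp
  have H: "N (Z,0) (N ?e (W,0)) = N ?e (N (Z,0) (W,0))" for Z W
    using hyp[of Z W] unfolding curv_def brx0 N00 by simp
  have comm: "N ?e w = N w ?e" for w
  proof -
    obtain W a where w: "w = (W, a)" by (cases w)
    have d: "(W, a) = (W, 0) + a *\<^sub>R ?e" by simp
    have "N ?e w = N ?e ((W, 0) + a *\<^sub>R ?e)" unfolding w by simp
    also have "\<dots> = N ?e (W,0) + a *\<^sub>R N ?e ?e"
      using N_bil by (simp only: bilinear_radd bilinear_rmul)
    also have "\<dots> = N (W,0) ?e + a *\<^sub>R N ?e ?e" using N_comm[of W 1] by simp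
    also have "\<dots> = N ((W, 0) + a *\<^sub>R ?e) ?e"
      using N_bil by (simp only: bilinear_ladd bilinear_lmul)
    also have "\<dots> = N w ?e" unfolding w by simp
    finally show ?thesis .
  qed
  have tf: "nabla X Y - nabla Y X = br X Y"
  proof -
    have "\<theta> (nabla X Y - nabla Y X - br X Y) Z = 0" for Z
    proof -
      have "\<theta> (nabla X Y - nabla Y X - br X Y) Z = \<theta> (nabla X Y) Z - \<theta> (nabla Y X) Z - \<theta> (br X Y) Z"
        using thbil by (simp add: bilinear_lsub)
      also have "\<dots> = - \<theta> Y (br X Z) + \<theta> X (br Y Z) - \<theta> (br X Y) Z"
        using nabla_def by simp
      also have "\<dots> = 0"
        using cocy[of X Y Z] thskew[of "br Y Z" X] thskew[of "br Z X" Y] brskew[of X Z] thskew[of Y "br X Z"]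
          thskew[of "- br X Z" Y] bilinear_lneg[OF thbil, of "br X Z" Y]
        by simp
      finally show ?thesis .
    qed
    then have "nabla X Y - nabla Y X - br X Y = 0" using thnd by blast
    then show ?thesis by simp
  qed
  have xy: "N (X,0) (Y,0) - N (Y,0) (X,0) = ext_bracket br \<theta> (X,0) (Y,0)"
    unfolding N_gg ext_bracket_def using tf phi_skew[of X Y] by simp
  have "curv N (ext_bracket br \<theta>) (X, 0) (Y, 0) ?e
      = N (X,0) (N ?e (Y,0)) - N (Y,0) (N ?e (X,0)) - N (ext_bracket br \<theta> (X,0) (Y,0)) ?e"
    unfolding curv_def using comm by simp
  also have "\<dots> = N ?e (N (X,0) (Y,0) - N (Y,0) (X,0)) - N (ext_bracket br \<theta> (X,0) (Y,0)) ?e"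
    using H[of X Y] H[of Y X] N_bil by (simp add: bilinear_rsub)
  also have "\<dots> = 0" unfolding xy comm by simp
  finally show "curv N (ext_bracket br \<theta>) (X, 0) (Y, 0) ?e = 0" .
qed

end
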